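(* Let $q$ be a prime power, $n,r$ integers with $r\le\lfloor n/2\rfloor$, and $0\le u,s\le r$, $1\le d\le r$. Let ${\bf X} = ({\bf A}\mid{\bf B})\in\mathrm{GF}(q)^{r\times n}$ with ${\bf A}$ having $r$ columns and ${\bf B}$ having $n-r$ columns, and write ${\bf A} = ({\bf A}_1\mid{\bf a}\mid{\bf A}_2)$, ${\bf B}=({\bf B}_1\mid{\bf b}\mid{\bf B}_2)$, where ${\bf a}$ and ${\bf b}$ are the $d$-th columns of ${\bf A}$ and ${\bf B}$ respectively. Then ${\bf X}\in F(u,s,d)$ if and only if $\mathrm{rk}({\bf X}) = r$, $\mathrm{rk}({\bf B})\le u$, and $\mathrm{rk}({\bf B}_1-{\bf A}_1\mid{\bf b}-{\bf a}\mid{\bf B}_2)\le s$.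
   Context: $E_r(q,n)$ is the set of $r$-dimensional subspaces of $\mathrm{GF}(q)^n$ with injection distance $d_{\mathrm{I}}(U,V)=\dim(U+V)-\min\{\dim U,\dim V\}$; $B_t(U)=\{V\in E_r(q,n): d_{\mathrm{I}}(U,V)\le t\}$; $R({\bf M})$ is the row space of ${\bf M}$. For $0\le d\le r$, ${\bf P}_d\in\mathrm{GF}(q)^{r\times(n-r)}$ is the matrix with ${\bf I}_d$ in its top-left $d\times d$ block and zeros elsewhere, and $U_d = R({\bf I}_r\mid{\bf P}_d)$. $F(u,s,d)$ is the set of all matrices in $\mathrm{GF}(q)^{r\times n}$ of rank $r$ whose row space lies in $B_u(U_0)\cap B_s(U_d)$. *)

theory Defs
  imports "Jordan_Normal_Form.DL_Rank"
begin

text \<open>Vectors of GF(q)^n are 'a vec in carrier_vec n, for a finite field type 'a.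
  Subspaces are subspaces (HOL-Algebra/VectorSpace sense) of module_vec TYPE('a) n.\<close>

definition is_subspace :: "nat \<Rightarrow> 'a::field vec set \<Rightarrow> bool" where
  "is_subspace n W = subspace class_ring W (module_vec TYPE('a) n)"

definition subdim :: "nat \<Rightarrow> 'a::field vec set \<Rightarrow> nat" where
  "subdim n W = vectorspace.dim class_ring ((module_vec TYPE('a) n)\<lparr>carrier := W\<rparr>)"

definition subspace_plus :: "'a::field vec set \<Rightarrow> 'a vec set \<Rightarrow> 'a vec set" where
  "subspace_plus U V = {u + v | u v. u \<in> U \<and> v \<in> V}"

text \<open>Injection distance d_I(U,V) = dim(U+V) - min(dim U, dim V).\<close>
definition inj_dist :: "nat \<Rightarrow> 'a::field vec set \<Rightarrow> 'a vec set \<Rightarrow> nat" where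
  "inj_dist n U V = subdim n (subspace_plus U V) - min (subdim n U) (subdim n V)"

text \<open>E_r(q,n): the r-dimensional subspaces of GF(q)^n.\<close>
definition Grass :: "nat \<Rightarrow> nat \<Rightarrow> 'a::field vec set set" where
  "Grass r n = {W. is_subspace n W \<and> subdim n W = r}"

text \<open>B_t(U) inside E_r(q,n).\<close>
definition inj_ball :: "nat \<Rightarrow> nat \<Rightarrow> nat \<Rightarrow> 'a::field vec set \<Rightarrow> 'a vec set set" where
  "inj_ball r n t U = {V \<in> Grass r n. inj_dist n U V \<le> t}"

text \<open>Row space R(M) of a matrix with n columns, and rank.\<close>
definition row_sp :: "nat \<Rightarrow> 'a::field mat \<Rightarrow> 'a vec set" where
  "row_sp n M = vec_space.row_space n M"

definition rk :: "'a::field mat \<Rightarrow> nat" where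
  "rk M = vec_space.rank (dim_row M) M"

text \<open>Horizontal concatenation (A | B) and column slices.\<close>
definition hconcat :: "'a mat \<Rightarrow> 'a mat \<Rightarrow> 'a mat" where
  "hconcat A B = mat (dim_row A) (dim_col A + dim_col B)
     (\<lambda>(i,j). if j < dim_col A then A $$ (i,j) else B $$ (i, j - dim_col A))"

text \<open>Columns i, ..., j-1 of M (0-indexed).\<close>
definition col_slice :: "'a mat \<Rightarrow> nat \<Rightarrow> nat \<Rightarrow> 'a mat" where
  "col_slice M i j = mat (dim_row M) (j - i) (\<lambda>(k,l). M $$ (k, i + l))"

text \<open>P_d: r x (n-r) matrix with I_d in the top-left d x d block, zeros elsewhere.\<close>
definition P_mat :: "nat \<Rightarrow> nat \<Rightarrow> nat \<Rightarrow> 'a::field mat" where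
  "P_mat r n d = mat r (n - r) (\<lambda>(i,j). if i = j \<and> i < d then 1 else 0)"

text \<open>U_d = R(I_r | P_d).\<close>
definition U_sub :: "nat \<Rightarrow> nat \<Rightarrow> nat \<Rightarrow> 'a::field vec set" where
  "U_sub r n d = row_sp n (hconcat (1\<^sub>m r) (P_mat r n d))"

text \<open>F(u,s,d): rank-r matrices in GF(q)^{r x n} whose row space lies in B_u(U_0) \<inter> B_s(U_d).\<close>
definition F_set :: "nat \<Rightarrow> nat \<Rightarrow> nat \<Rightarrow> nat \<Rightarrow> nat \<Rightarrow> 'a::field mat set" where
  "F_set r n u s d = {X \<in> carrier_mat r n. rk X = r \<and>
      row_sp n X \<in> inj_ball r n u (U_sub r n 0) \<inter> inj_ball r n s (U_sub r n d)}"

end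

theory Submission
  imports Defs
begin


lemma (in vec_space) subdim_vs: "subdim n W = vectorspace.dim class_ring (vs W)"
  unfolding subdim_def by simp

lemma (in vec_space) is_subspace_iff: "is_subspace n W = subspace class_ring W V"
  unfolding is_subspace_def by simp

lemma (in vec_space) subspace_span_self:
  assumes "subspace class_ring W V"
  shows "span W = W"
proof
  have sm: "submodule class_ring W V" using assms unfolding subspace_def by simp
  show "span W \<subseteq> W" by (rule span_is_subset[OF subset_refl sm])
  have "W \<subseteq> carrier V" using sm unfolding submodule_def by simp
  then show "W \<subseteq> span W" using in_own_span[of W] by simp
qed

lemma (in vec_space) vs_fin_dim:
  assumes "subspace class_ring (W :: 'a vec set) V" and fin: "finite (UNIV :: 'a set)"
  shows "vectorspace.fin_dim class_ring (vs W)"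
proof -
  have sm: "submodule class_ring W V" using assms unfolding subspace_def by simp
  have Wc: "W \<subseteq> carrier_vec n" using sm unfolding submodule_def by simp
  have "finite (carrier_vec n :: 'a vec set)"
  proof -
    have "carrier_vec n \<subseteq> (\<lambda>f. vec n f) ` ({0..<n} \<rightarrow>\<^sub>E (UNIV::'a set))"
    proof
      fix v :: "'a vec" assume v: "v \<in> carrier_vec n"
      have e: "v = vec n (restrict (\<lambda>i. v $ i) {0..<n})"
        using v by (intro eq_vecI) auto
      show "v \<in> (\<lambda>f. vec n f) ` ({0..<n} \<rightarrow>\<^sub>E UNIV)"
        by (rule image_eqI[where x="restrict (\<lambda>i. v $ i) {0..<n}" and f="\<lambda>f. vec n f", OF e]) simp
    qed
    thus ?thesis by (rule finite_subset) (intro finite_imageI finite_PiE fin, auto)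
  qed
  then have "finite W" using Wc finite_subset by blast
  from fin_dim_span[OF this] Wc subspace_span_self[OF assms(1)] show ?thesis by simp
qed


lemma dim_image_kernel:
  fixes f :: "'a::{finite,field} vec \<Rightarrow> 'a vec"
  assumes W: "is_subspace k W"
    and f_carr: "\<And>x. x \<in> carrier_vec k \<Longrightarrow> f x \<in> carrier_vec m"
    and f_add: "\<And>x y. x \<in> carrier_vec k \<Longrightarrow> y \<in> carrier_vec k \<Longrightarrow> f (x + y) = f x + f y"
    and f_smult: "\<And>c x. x \<in> carrier_vec k \<Longrightarrow> f (c \<cdot>\<^sub>v x) = c \<cdot>\<^sub>v f x"
  shows "subdim m (f ` W) + subdim k {x \<in> W. f x = 0\<^sub>v m} = subdim k W"
proof -
  interpret K: vec_space "TYPE('a)" k .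
  interpret M: vec_space "TYPE('a)" m .
  have sub: "subspace class_ring W K.V" using W unfolding is_subspace_def .
  have vsW: "vectorspace class_ring (K.vs W)" by (rule K.subspace_is_vs[OF sub])
  have Wc: "W \<subseteq> carrier_vec k" using sub unfolding subspace_def submodule_def by simp
  have hom: "f \<in> LinearCombinations.module_hom class_ring (K.vs W) M.V"
    unfolding LinearCombinations.module_hom_def
  proof (intro CollectI conjI allI impI)
    show "f \<in> carrier (K.vs W) \<rightarrow> carrier M.V" using f_carr Wc by auto
    fix m1 m2 assume "m1 \<in> carrier (K.vs W) \<and> m2 \<in> carrier (K.vs W)"
    then show "f (m1 \<oplus>\<^bsub>K.vs W\<^esub> m2) = f m1 \<oplus>\<^bsub>M.V\<^esub> f m2"
      using f_add Wc by (auto simp: module_vec_simps)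
  next
    fix c :: 'a and m1 assume "c \<in> carrier class_ring \<and> m1 \<in> carrier (K.vs W)"
    then show "f (c \<odot>\<^bsub>K.vs W\<^esub> m1) = c \<odot>\<^bsub>M.V\<^esub> f m1"
      using f_smult Wc by (auto simp: module_vec_simps)
  qed
  have lm: "linear_map class_ring (K.vs W) M.V f"
    by (intro linear_map.intro vsW M.vectorspace_axioms mod_hom.intro mod_hom_axioms.intro hom
        vectorspace.axioms(1)[OF vsW] M.module_axioms)
  have fd: "vectorspace.fin_dim class_ring (K.vs W)"
    by (rule K.vs_fin_dim[OF sub]) simp
  note rn = linear_map.rank_nullity[OF lm fd]
  have im: "mod_hom.im (K.vs W) f = f ` W" unfolding mod_hom.im_def[OF linear_map.axioms(3)[OF lm]] by simp
  have ker: "mod_hom.ker (K.vs W) M.V f = {x \<in> W. f x = 0\<^sub>v m}"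
    unfolding mod_hom.ker_def[OF linear_map.axioms(3)[OF lm]] by simp
  have e: "(K.vs W)\<lparr>carrier := {x \<in> W. f x = 0\<^sub>v m}\<rparr> = K.vs {x \<in> W. f x = 0\<^sub>v m}" by simp
  from rn[unfolded im ker e] show ?thesis unfolding subdim_def .
qed


definition mimg :: "'a::field mat \<Rightarrow> 'a vec set" where
  "mimg M = (\<lambda>x. M *\<^sub>v x) ` carrier_vec (dim_col M)"

lemma col_space_mimg: "vec_space.col_space (dim_row M) M = mimg M"
proof -
  interpret V: vec_space "TYPE('a)" "dim_row M" .
  have Mc: "M \<in> carrier_mat (dim_row M) (dim_col M)" by simp
  have "{y \<in> carrier_vec (dim_row M). \<exists>x\<in>carrier_vec (dim_col M). M *\<^sub>v x = y} = (\<lambda>x. M *\<^sub>v x) ` carrier_vec (dim_col M)"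
  proof (intro equalityI subsetI)
    fix y assume "y \<in> {y \<in> carrier_vec (dim_row M). \<exists>x\<in>carrier_vec (dim_col M). M *\<^sub>v x = y}"
    then obtain x where "x \<in> carrier_vec (dim_col M)" "y = M *\<^sub>v x" by blast
    then show "y \<in> (\<lambda>x. M *\<^sub>v x) ` carrier_vec (dim_col M)" by (rule rev_image_eqI)
  next
    fix y assume "y \<in> (\<lambda>x. M *\<^sub>v x) ` carrier_vec (dim_col M)"
    then obtain x where x: "x \<in> carrier_vec (dim_col M)" and y: "y = M *\<^sub>v x" by blast
    have "y \<in> carrier_vec (dim_row M)" unfolding y by (simp add: carrier_vecI)
    then show "y \<in> {y \<in> carrier_vec (dim_row M). \<exists>x\<in>carrier_vec (dim_col M). M *\<^sub>v x = y}"
      using x y by blast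
  qed
  with V.col_space_eq[OF Mc] show ?thesis unfolding mimg_def by simp
qed

lemma mimg_subspace: "is_subspace (dim_row M) (mimg (M :: 'a::field mat))"
proof -
  interpret V: vec_space "TYPE('a)" "dim_row M" .
  have "set (cols M) \<subseteq> carrier_vec (dim_row M)" by (auto simp: cols_def)
  from V.span_is_subspace[OF this] show ?thesis
    unfolding is_subspace_def col_space_mimg[symmetric] V.col_space_def by simp
qed

lemma rk_mimg: "rk M = subdim (dim_row M) (mimg M)"
proof -
  interpret V: vec_space "TYPE('a)" "dim_row M" .
  show ?thesis unfolding rk_def V.rank_def subdim_def col_space_mimg[symmetric] V.col_space_def by simp
qed

lemma row_sp_mimg: assumes "X \<in> carrier_mat r n" shows "row_sp n X = mimg X\<^sup>T"
proof -
  interpret V: vec_space "TYPE('a)" n .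
  have "dim_row X\<^sup>T = n" using assms by simp
  then show ?thesis unfolding row_sp_def V.row_space_eq_col_space_transpose
    using col_space_mimg[of "X\<^sup>T"] by simp
qed

lemma subdim_mono:
  assumes "is_subspace k (U :: 'a::{finite,field} vec set)" "is_subspace k W" "U \<subseteq> W"
  shows "subdim k U \<le> subdim k W"
proof -
  interpret K: vec_space "TYPE('a)" k .
  have sU: "subspace class_ring U K.V" and sW: "subspace class_ring W K.V"
    using assms unfolding is_subspace_def by auto
  have vsW: "vectorspace class_ring (K.vs W)" by (rule K.subspace_is_vs[OF sW])
  have n: "subspace class_ring U (K.vs W)" by (rule K.nested_subspaces[OF sW sU assms(3)])
  have f1: "vectorspace.fin_dim class_ring (K.vs W)" by (rule K.vs_fin_dim[OF sW]) simp
  have f2: "vectorspace.fin_dim class_ring (K.vs U)" by (rule K.vs_fin_dim[OF sU]) simp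
  have "vectorspace.dim class_ring ((K.vs W)\<lparr>carrier := U\<rparr>) \<le> vectorspace.dim class_ring (K.vs W)"
    using vectorspace.subspace_dim[OF vsW n f1] f2 by simp
  then show ?thesis unfolding subdim_def by simp
qed

lemma subdim_full: "subdim k (carrier_vec k :: 'a::field vec set) = k"
proof -
  interpret K: vec_space "TYPE('a)" k .
  have e: "K.vs (carrier_vec k) = K.V" by (simp add: module_vec_def)
  show ?thesis unfolding subdim_def e using K.dim_is_n by simp
qed

lemma full_subspace: "is_subspace k (carrier_vec k :: 'a::field vec set)"
proof -
  interpret K: vec_space "TYPE('a)" k .
  have "set (unit_vecs k) \<subseteq> carrier_vec k" by (auto simp: unit_vecs_def)
  from K.span_is_subspace[OF this] show ?thesis unfolding is_subspace_def K.span_unit_vecs_is_carrier .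
qed


lemma rowrank_le:
  fixes M :: "'a::{finite,field} mat"
  assumes M: "M \<in> carrier_mat m k"
  shows "subdim k (mimg M\<^sup>T) \<le> rk M"
proof -
  interpret V: vec_space "TYPE('a)" m .
  define CS where "CS = V.span (set (cols M))"
  have colsC: "set (cols M) \<subseteq> carrier_vec m" using M by (auto simp: cols_def)
  have subCS: "subspace class_ring CS V.V" unfolding CS_def by (rule V.span_is_subspace[OF colsC])
  have smCS: "submodule class_ring CS V.V" using subCS unfolding subspace_def by simp
  have vsCS: "vectorspace class_ring (V.vs CS)" by (rule V.subspace_is_vs[OF subCS])
  have fdCS: "vectorspace.fin_dim class_ring (V.vs CS)" unfolding CS_def by (rule V.fin_dim_span_cols[OF M])
  obtain b where fb: "finite b" and bb: "vectorspace.basis class_ring (V.vs CS) b"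
    using vectorspace.finite_basis_exists[OF vsCS fdCS] by blast
  have dimb: "vectorspace.dim class_ring (V.vs CS) = card b"
    using vectorspace.dim_basis[OF vsCS fb bb] .
  have drM: "dim_row M = m" using M by simp
  have rkM: "rk M = card b" unfolding rk_def drM V.rank_def using dimb unfolding CS_def by simp
  have bCS: "b \<subseteq> CS" and spb: "LinearCombinations.module.span class_ring (V.vs CS) b = CS"
    using bb unfolding vectorspace.basis_def[OF vsCS] by auto
  have spb2: "V.span b = CS" using spb V.span_li_not_depend(1)[OF bCS smCS] by simp
  obtain bs where setbs: "set bs = b" and dbs: "distinct bs" using finite_distinct_list[OF fb] by blast
  define c where "c = length bs"
  have cb: "c = card b" unfolding c_def using setbs dbs distinct_card by fastforce
  have bsC: "set bs \<subseteq> carrier_vec m"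
    using bCS setbs smCS unfolding submodule_def by auto
  define C where "C = mat_of_cols m bs"
  have C: "C \<in> carrier_mat m c" unfolding C_def c_def by simp
  have colspC: "V.col_space C = CS" unfolding V.col_space_def C_def using spb2 setbs bsC
    by (simp add: cols_mat_of_cols)
  have "\<forall>j<k. \<exists>x\<in>carrier_vec c. C *\<^sub>v x = col M j"
  proof (intro allI impI)
    fix j assume j: "j < k"
    have "col M j \<in> set (cols M)" using j M by (auto simp: cols_def)
    then have "col M j \<in> CS" unfolding CS_def using V.in_own_span[OF colsC] by auto
    then show "\<exists>x\<in>carrier_vec c. C *\<^sub>v x = col M j"
      using V.col_space_eq[OF C] colspC C by auto
  qed
  then obtain w where w: "\<And>j. j < k \<Longrightarrow> w j \<in> carrier_vec c \<and> C *\<^sub>v w j = col M j"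
    by metis
  define W where "W = mat c k (\<lambda>(i,j). w j $ i)"
  have W: "W \<in> carrier_mat c k" unfolding W_def by simp
  have colW: "col W j = w j" if j: "j < k" for j
  proof -
    have wc: "w j \<in> carrier_vec c" using w[OF j] by simp
    show ?thesis unfolding W_def using j wc by (intro eq_vecI) auto
  qed
  have MCW: "M = C * W"
  proof (rule eq_matI)
    fix i j assume i: "i < dim_row (C * W)" and j: "j < dim_col (C * W)"
    then have i': "i < m" and j': "j < k" using C W by auto
    have "(C * W) $$ (i, j) = row C i \<bullet> w j" using i' j' C W colW by simp
    also have "\<dots> = (C *\<^sub>v w j) $ i" using i' C by simp
    also have "\<dots> = M $$ (i, j)" using w[OF j'] i' j' M by simp
    finally show "M $$ (i, j) = (C * W) $$ (i, j)" by simp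
  qed (use C W M in auto)
  have Mt: "M\<^sup>T = W\<^sup>T * C\<^sup>T" unfolding MCW using C W by (simp add: transpose_mult)
  have sub: "mimg M\<^sup>T \<subseteq> mimg W\<^sup>T"
  proof
    fix v assume "v \<in> mimg M\<^sup>T"
    then obtain y where y: "y \<in> carrier_vec m" and v: "v = M\<^sup>T *\<^sub>v y" unfolding mimg_def using M by auto
    have "v = W\<^sup>T *\<^sub>v (C\<^sup>T *\<^sub>v y)" unfolding v Mt
      using C W y by (simp add: assoc_mult_mat_vec[of _ k c _ m])
    moreover have "C\<^sup>T *\<^sub>v y \<in> carrier_vec (dim_col W\<^sup>T)" using C W by (simp add: carrier_vecI)
    ultimately show "v \<in> mimg W\<^sup>T" unfolding mimg_def by blast
  qed
  have "subdim k (mimg M\<^sup>T) \<le> subdim k (mimg W\<^sup>T)"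
    using subdim_mono[OF _ _ sub] mimg_subspace[of "M\<^sup>T"] mimg_subspace[of "W\<^sup>T"] M W by simp
  also have "\<dots> = rk W\<^sup>T" using rk_mimg[of "W\<^sup>T"] W by simp
  also have "\<dots> \<le> c" unfolding rk_def using vec_space.rank_le_nc[of "W\<^sup>T" k c] W by simp
  finally show ?thesis using rkM cb by simp
qed

lemma rowrank_eq:
  fixes M :: "'a::{finite,field} mat"
  assumes M: "M \<in> carrier_mat m k"
  shows "subdim k (mimg M\<^sup>T) = rk M"
proof (rule antisym)
  show "subdim k (mimg M\<^sup>T) \<le> rk M" by (rule rowrank_le[OF M])
  have Mt: "M\<^sup>T \<in> carrier_mat k m" using M by simp
  have "rk M = subdim m (mimg M)" using rk_mimg[of M] M by simp
  also have "\<dots> = subdim m (mimg (M\<^sup>T)\<^sup>T)" by simp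
  also have "\<dots> \<le> rk M\<^sup>T" by (rule rowrank_le[OF Mt])
  also have "\<dots> = subdim k (mimg M\<^sup>T)" using rk_mimg[of "M\<^sup>T"] M by simp
  finally show "rk M \<le> subdim k (mimg M\<^sup>T)" .
qed



definition phi :: "nat \<Rightarrow> nat \<Rightarrow> nat \<Rightarrow> 'a::field vec \<Rightarrow> 'a vec" where
 "phi r n d v = vec (n-r) (\<lambda>j. v $ (r+j) - (if j < d then v $ j else 0))"

definition Cm :: "nat \<Rightarrow> nat \<Rightarrow> nat \<Rightarrow> 'a::field mat \<Rightarrow> 'a mat" where
 "Cm r n d X = mat r (n-r) (\<lambda>(i,j). X $$ (i, r+j) - (if j < d then X $$ (i,j) else 0))"

lemma hconcat_index:
  assumes "i < dim_row A" "j < dim_col A + dim_col B"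
  shows "hconcat A B $$ (i,j) = (if j < dim_col A then A $$ (i,j) else B $$ (i, j - dim_col A))"
  using assms unfolding hconcat_def by simp

lemma hconcat_dims[simp]: "dim_row (hconcat A B) = dim_row A" "dim_col (hconcat A B) = dim_col A + dim_col B"
  unfolding hconcat_def by simp_all

lemma P_dims[simp]: "dim_row (P_mat r n d) = r" "dim_col (P_mat r n d) = n - r"
  unfolding P_mat_def by simp_all

lemma YT_mult:
  fixes z :: "'a::field vec"
  assumes dr: "d \<le> r" and rn: "r \<le> n" and z: "z \<in> carrier_vec r"
  shows "(hconcat (1\<^sub>m r) (P_mat r n d))\<^sup>T *\<^sub>v z = vec n (\<lambda>i. if i < r then z $ i else if i - r < d then z $ (i - r) else 0)"
proof (rule eq_vecI)
  let ?Y = "hconcat (1\<^sub>m r) (P_mat r n d) :: 'a mat"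
  have dY: "dim_row ?Y = r" "dim_col ?Y = n" using rn by simp_all
  show "dim_vec (?Y\<^sup>T *\<^sub>v z) = dim_vec (vec n (\<lambda>i. if i < r then z $ i else if i - r < d then z $ (i - r) else 0))"
    using dY by simp
  fix i assume "i < dim_vec (vec n (\<lambda>i. if i < r then z $ i else if i - r < d then z $ (i - r) else 0))"
  then have i: "i < n" by simp
  have "(?Y\<^sup>T *\<^sub>v z) $ i = (\<Sum>k\<in>{0..<r}. ?Y $$ (k,i) * z $ k)"
    using i dY z by (simp add: scalar_prod_def)
  also have "\<dots> = (\<Sum>k\<in>{0..<r}. (if i < r then (if k = i then z $ k else 0) else (if k = i - r \<and> k < d then z $ k else 0)))"
    using i rn dY by (intro sum.cong refl) (simp add: hconcat_index P_mat_def)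
  also have "\<dots> = (if i < r then z $ i else if i - r < d then z $ (i - r) else 0)"
  proof (cases "i < r")
    case True then show ?thesis by (simp add: sum.delta')
  next
    case False
    show ?thesis
    proof (cases "i - r < d")
      case True
      have "(\<Sum>k\<in>{0..<r}. (if i < r then (if k = i then z $ k else 0) else (if k = i - r \<and> k < d then z $ k else 0)))
          = (\<Sum>k\<in>{0..<r}. if k = i - r then z $ k else 0)"
        by (intro sum.cong) (use False True in auto)
      also have "\<dots> = z $ (i - r)" using True dr by (simp add: sum.delta')
      finally show ?thesis using False True by simp
    next
      case F2: False
      have "(\<Sum>k\<in>{0..<r}. (if i < r then (if k = i then z $ k else 0) else (if k = i - r \<and> k < d then z $ k else 0)))
          = (\<Sum>k\<in>{0..<r}. 0)"
        by (intro sum.cong) (use False F2 in auto)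
      then show ?thesis using False F2 by simp
    qed
  qed
  finally show "(?Y\<^sup>T *\<^sub>v z) $ i = vec n (\<lambda>i. if i < r then z $ i else if i - r < d then z $ (i - r) else 0) $ i"
    using i by simp
qed


lemma phi_carrier: "phi r n d v \<in> carrier_vec (n - r)"
  unfolding phi_def by simp

lemma phi_carrier': "x \<in> carrier_vec n \<Longrightarrow> phi r n d x \<in> carrier_vec (n - r)"
  by (rule phi_carrier)

lemma phi_add:
  assumes "x \<in> carrier_vec n" "y \<in> carrier_vec n" "d \<le> r" "r \<le> n"
  shows "phi r n d (x + y) = phi r n d x + phi r n d y"
  unfolding phi_def using assms by (intro eq_vecI) auto

lemma phi_smult_aux: "\<not> j < d \<Longrightarrow> j < n - r \<Longrightarrow> c * x $ (r+j) = (c \<cdot>\<^sub>v phi r n d x) $ j"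
  unfolding phi_def by simp

lemma phi_smult:
  assumes "x \<in> carrier_vec n" "d \<le> r" "r \<le> n"
  shows "phi r n d (c \<cdot>\<^sub>v x) = c \<cdot>\<^sub>v phi r n d x"
proof (rule eq_vecI)
  show "dim_vec (phi r n d (c \<cdot>\<^sub>v x)) = dim_vec (c \<cdot>\<^sub>v phi r n d x)" by (simp add: phi_def)
  fix j assume "j < dim_vec (c \<cdot>\<^sub>v phi r n d x)"
  then have j: "j < n - r" by (simp add: phi_def)
  have rj: "r + j < n" using j assms by simp
  show "phi r n d (c \<cdot>\<^sub>v x) $ j = (c \<cdot>\<^sub>v phi r n d x) $ j"
  proof (cases "j < d")
    case True
    then have "j < n" using assms by simp
    then show ?thesis using True j rj assms unfolding phi_def by (simp add: right_diff_distrib)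
  next
    case False
    have xc: "dim_vec x = n" using assms(1) by simp
    have "phi r n d (c \<cdot>\<^sub>v x) $ j = (c \<cdot>\<^sub>v x) $ (r+j)" using False j unfolding phi_def by simp
    also have "\<dots> = c * x $ (r+j)" using rj xc by simp
    also have "\<dots> = (c \<cdot>\<^sub>v phi r n d x) $ j" by (rule phi_smult_aux[OF False j])
    finally show ?thesis .
  qed
qed

lemma U_sub_mimg:
  assumes "r \<le> n"
  shows "U_sub r n d = mimg (hconcat (1\<^sub>m r) (P_mat r n d))\<^sup>T"
proof -
  have "hconcat (1\<^sub>m r) (P_mat r n d) \<in> carrier_mat r n" using assms by (intro carrier_matI) simp_all
  from row_sp_mimg[OF this] show ?thesis unfolding U_sub_def .
qed

lemma U_sub_ker:
  fixes dummy :: "'a::field itself"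
  assumes dr: "d \<le> r" and rn: "r \<le> n" and dnr: "d \<le> n - r"
  shows "(U_sub r n d :: 'a vec set) = {v \<in> carrier_vec n. phi r n d v = 0\<^sub>v (n - r)}"
proof -
  let ?Y = "hconcat (1\<^sub>m r) (P_mat r n d) :: 'a mat"
  have dY: "dim_col ?Y\<^sup>T = r" by simp
  show ?thesis
  proof (intro equalityI subsetI)
    fix v :: "'a vec" assume "v \<in> U_sub r n d"
    then obtain z where z: "z \<in> carrier_vec r" and v: "v = ?Y\<^sup>T *\<^sub>v z"
      unfolding U_sub_mimg[OF rn] mimg_def by auto
    have v': "v = vec n (\<lambda>i. if i < r then z $ i else if i - r < d then z $ (i - r) else 0)"
      using YT_mult[OF dr rn z] v by simp
    show "v \<in> {v \<in> carrier_vec n. phi r n d v = 0\<^sub>v (n - r)}"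
      unfolding v' phi_def using dr rn by (auto intro!: eq_vecI)
  next
    fix v :: "'a vec" assume "v \<in> {v \<in> carrier_vec n. phi r n d v = 0\<^sub>v (n - r)}"
    then have v: "v \<in> carrier_vec n" and pv: "phi r n d v = 0\<^sub>v (n - r)" by auto
    define z where "z = vec r (\<lambda>i. v $ i)"
    have z: "z \<in> carrier_vec r" unfolding z_def by simp
    have pj: "\<And>j. j < n - r \<Longrightarrow> v $ (r + j) = (if j < d then v $ j else 0)"
    proof -
      fix j assume j: "j < n - r"
      have "phi r n d v $ j = 0" using pv j by simp
      then show "v $ (r + j) = (if j < d then v $ j else 0)" using j unfolding phi_def by simp
    qed
    have "?Y\<^sup>T *\<^sub>v z = v"
      unfolding YT_mult[OF dr rn z]
    proof (rule eq_vecI)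
      fix i assume i: "i < dim_vec v"
      then have i': "i < n" using v by simp
      show "vec n (\<lambda>i. if i < r then z $ i else if i - r < d then z $ (i - r) else 0) $ i = v $ i"
      proof (cases "i < r")
        case True then show ?thesis using i' unfolding z_def by simp
      next
        case False
        then have "i = r + (i - r)" "i - r < n - r" using i' by auto
        then show ?thesis using False pj[of "i - r"] i' dr unfolding z_def by (auto simp: not_less)
      qed
    qed (use v in simp)
    then show "v \<in> U_sub r n d" unfolding U_sub_mimg[OF rn] mimg_def using z by force
  qed
qed

lemma phi_XT:
  fixes X :: "'a::field mat"
  assumes X: "X \<in> carrier_mat r n" and z: "z \<in> carrier_vec r" and dr: "d \<le> r" and rn: "r \<le> n"
  shows "phi r n d (X\<^sup>T *\<^sub>v z) = (Cm r n d X)\<^sup>T *\<^sub>v z"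
proof (rule eq_vecI)
  show "dim_vec (phi r n d (X\<^sup>T *\<^sub>v z)) = dim_vec ((Cm r n d X)\<^sup>T *\<^sub>v z)"
    unfolding phi_def Cm_def by simp
  fix j assume "j < dim_vec ((Cm r n d X)\<^sup>T *\<^sub>v z)"
  then have j: "j < n - r" unfolding Cm_def by simp
  have jd: "j < d \<Longrightarrow> j < n" using j dr rn by auto
  have "phi r n d (X\<^sup>T *\<^sub>v z) $ j = (\<Sum>k\<in>{0..<r}. X $$ (k, r+j) * z $ k) - (if j < d then (\<Sum>k\<in>{0..<r}. X $$ (k, j) * z $ k) else 0)"
    unfolding phi_def using j jd X z by (simp add: scalar_prod_def)
  also have "\<dots> = (\<Sum>k\<in>{0..<r}. (X $$ (k, r+j) - (if j < d then X $$ (k,j) else 0)) * z $ k)"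
    by (simp add: sum_subtractf left_diff_distrib)
  also have "\<dots> = ((Cm r n d X)\<^sup>T *\<^sub>v z) $ j"
    using j z unfolding Cm_def by (simp add: scalar_prod_def)
  finally show "phi r n d (X\<^sup>T *\<^sub>v z) $ j = ((Cm r n d X)\<^sup>T *\<^sub>v z) $ j" .
qed


lemma U_sub_props:
  assumes dr: "d \<le> r" and rnr: "r \<le> n - r"
  shows "is_subspace n (U_sub r n d :: 'a::{finite,field} vec set)" "subdim n (U_sub r n d :: 'a vec set) = r"
proof -
  have rn: "r \<le> n" and dnr: "d \<le> n - r" using dr rnr by auto
  show "is_subspace n (U_sub r n d :: 'a vec set)"
    unfolding U_sub_mimg[OF rn] using mimg_subspace[of "(hconcat (1\<^sub>m r) (P_mat r n d :: 'a mat))\<^sup>T"] rn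
    by simp
  have "subdim (n - r) ((phi r n d :: 'a vec \<Rightarrow> 'a vec) ` carrier_vec n) + subdim n {x \<in> carrier_vec n. phi r n d x = (0\<^sub>v (n-r) :: 'a vec)} = subdim n (carrier_vec n :: 'a vec set)"
  proof -
    have c1: "\<And>x :: 'a vec. x \<in> carrier_vec n \<Longrightarrow> phi r n d x \<in> carrier_vec (n - r)" by (rule phi_carrier)
    have c2: "\<And>x y :: 'a vec. x \<in> carrier_vec n \<Longrightarrow> y \<in> carrier_vec n \<Longrightarrow> phi r n d (x + y) = phi r n d x + phi r n d y"
      by (rule phi_add[OF _ _ dr rn])
    have c3: "\<And>c (x :: 'a vec). x \<in> carrier_vec n \<Longrightarrow> phi r n d (c \<cdot>\<^sub>v x) = c \<cdot>\<^sub>v phi r n d x"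
      by (rule phi_smult[OF _ dr rn])
    show ?thesis by (rule dim_image_kernel[OF full_subspace c1 c2 c3])
  qed
  moreover have "phi r n d ` carrier_vec n = (carrier_vec (n - r) :: 'a vec set)"
  proof (intro equalityI subsetI)
    fix w :: "'a vec" assume "w \<in> phi r n d ` carrier_vec n" then show "w \<in> carrier_vec (n - r)" using phi_carrier by auto
  next
    fix w :: "'a vec" assume w: "w \<in> carrier_vec (n - r)"
    define v where "v = vec n (\<lambda>i. if i < r then 0 else w $ (i - r))"
    have "phi r n d v = w" unfolding phi_def v_def using w dr rn by (intro eq_vecI) auto
    moreover have "v \<in> carrier_vec n" unfolding v_def by simp
    ultimately show "w \<in> phi r n d ` carrier_vec n" by blast
  qed
  ultimately show "subdim n (U_sub r n d :: 'a vec set) = r"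
    unfolding U_sub_ker[OF dr rn dnr] subdim_full using rn by (simp add: subdim_full)
qed

lemma subspace_plus_sub:
  assumes "is_subspace n (A :: 'a::field vec set)" "is_subspace n B"
  shows "is_subspace n (subspace_plus A B)"
proof -
  interpret K: vec_space "TYPE('a)" n .
  have "subspace_plus A B = K.submodule_sum A B"
    unfolding subspace_plus_def K.submodule_sum_def by auto
  then show ?thesis using K.sum_is_subspace assms unfolding is_subspace_def by simp
qed

lemma subspace_zero: "is_subspace n (W :: 'a::field vec set) \<Longrightarrow> 0\<^sub>v n \<in> W"
  unfolding is_subspace_def subspace_def submodule_def by (auto simp: module_vec_simps)

lemma subspace_carrier: "is_subspace n (W :: 'a::field vec set) \<Longrightarrow> W \<subseteq> carrier_vec n"
  unfolding is_subspace_def subspace_def submodule_def by (auto simp: module_vec_simps)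

lemma sum_dim:
  fixes X :: "'a::{finite,field} mat"
  assumes X: "X \<in> carrier_mat r n" and dr: "d \<le> r" and rnr: "r \<le> n - r"
  shows "is_subspace n (subspace_plus (U_sub r n d) (row_sp n X))"
    "subdim n (subspace_plus (U_sub r n d) (row_sp n X)) = r + rk (Cm r n d X)"
proof -
  have rn: "r \<le> n" and dnr: "d \<le> n - r" using dr rnr by auto
  let ?U = "U_sub r n d :: 'a vec set"
  let ?V = "row_sp n X"
  let ?S = "subspace_plus ?U ?V"
  let ?f = "phi r n d :: 'a vec \<Rightarrow> 'a vec"
  have sU: "is_subspace n ?U" and dU: "subdim n ?U = r" using U_sub_props[OF dr rnr] by auto
  have V: "?V = mimg X\<^sup>T" by (rule row_sp_mimg[OF X])
  have sV: "is_subspace n ?V" unfolding V using mimg_subspace[of "X\<^sup>T"] X by simp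
  show sS: "is_subspace n ?S" by (rule subspace_plus_sub[OF sU sV])
  have Uc: "?U \<subseteq> carrier_vec n" and Vc: "?V \<subseteq> carrier_vec n" using subspace_carrier sU sV by auto
  have U0: "0\<^sub>v n \<in> ?U" and V0: "0\<^sub>v n \<in> ?V" using subspace_zero sU sV by auto
  have Uker: "\<And>u. u \<in> ?U \<Longrightarrow> ?f u = 0\<^sub>v (n - r)" using U_sub_ker[OF dr rn dnr] by auto
  have "subdim (n - r) (?f ` ?S) + subdim n {x \<in> ?S. ?f x = 0\<^sub>v (n-r)} = subdim n ?S"
  proof -
    have c1: "\<And>x :: 'a vec. x \<in> carrier_vec n \<Longrightarrow> phi r n d x \<in> carrier_vec (n - r)" by (rule phi_carrier)
    have c2: "\<And>x y :: 'a vec. x \<in> carrier_vec n \<Longrightarrow> y \<in> carrier_vec n \<Longrightarrow> phi r n d (x + y) = phi r n d x + phi r n d y"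
      by (rule phi_add[OF _ _ dr rn])
    have c3: "\<And>c (x :: 'a vec). x \<in> carrier_vec n \<Longrightarrow> phi r n d (c \<cdot>\<^sub>v x) = c \<cdot>\<^sub>v phi r n d x"
      by (rule phi_smult[OF _ dr rn])
    show ?thesis by (rule dim_image_kernel[OF sS c1 c2 c3])
  qed
  moreover have "{x \<in> ?S. ?f x = 0\<^sub>v (n-r)} = ?U"
  proof (intro equalityI subsetI)
    fix x assume "x \<in> {x \<in> ?S. ?f x = 0\<^sub>v (n-r)}"
    moreover then have "x \<in> carrier_vec n" using subspace_carrier[OF sS] by auto
    ultimately show "x \<in> ?U" using U_sub_ker[OF dr rn dnr] by auto
  next
    fix x assume x: "x \<in> ?U"
    then have "x = x + 0\<^sub>v n" using Uc by auto
    then have "x \<in> ?S" unfolding subspace_plus_def using x V0 by blast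
    then show "x \<in> {x \<in> ?S. ?f x = 0\<^sub>v (n-r)}" using Uker[OF x] by simp
  qed
  moreover have "?f ` ?S = ?f ` ?V"
  proof (intro equalityI subsetI)
    fix y assume "y \<in> ?f ` ?S"
    then obtain u v where u: "u \<in> ?U" and v: "v \<in> ?V" and y: "y = ?f (u + v)"
      unfolding subspace_plus_def by auto
    have "y = ?f u + ?f v" unfolding y using u v Uc Vc dr rn by (intro phi_add) auto
    also have "\<dots> = ?f v" using Uker[OF u] phi_carrier[of r n d v] by simp
    finally show "y \<in> ?f ` ?V" using v by blast
  next
    fix y assume "y \<in> ?f ` ?V"
    then obtain v where v: "v \<in> ?V" and y: "y = ?f v" by auto
    have "v = 0\<^sub>v n + v" using v Vc by auto
    then have "v \<in> ?S" unfolding subspace_plus_def using v U0 by blast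
    then show "y \<in> ?f ` ?S" using y by blast
  qed
  moreover have "?f ` ?V = mimg (Cm r n d X)\<^sup>T"
  proof -
    have "?f ` ?V = (\<lambda>z. ?f (X\<^sup>T *\<^sub>v z)) ` carrier_vec r" unfolding V mimg_def using X by auto
    also have "\<dots> = (\<lambda>z. (Cm r n d X)\<^sup>T *\<^sub>v z) ` carrier_vec r"
      using phi_XT[OF X _ dr rn] by (intro image_cong) auto
    finally show ?thesis unfolding mimg_def Cm_def by simp
  qed
  moreover have "subdim (n - r) (mimg (Cm r n d X)\<^sup>T) = rk (Cm r n d X)"
    by (rule rowrank_eq[of _ r]) (simp add: Cm_def)
  ultimately show "subdim n ?S = r + rk (Cm r n d X)" using dU by simp
qed


lemma ball_iff:
  fixes X :: "'a::{finite,field} mat"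
  assumes X: "X \<in> carrier_mat r n" and dr: "d \<le> r" and rnr: "r \<le> n - r" and rk: "rk X = r"
  shows "row_sp n X \<in> inj_ball r n t (U_sub r n d) \<longleftrightarrow> rk (Cm r n d X) \<le> t"
proof -
  have V: "row_sp n X = mimg X\<^sup>T" by (rule row_sp_mimg[OF X])
  have sV: "is_subspace n (row_sp n X)" unfolding V using mimg_subspace[of "X\<^sup>T"] X by simp
  have dV: "subdim n (row_sp n X) = r" unfolding V using rowrank_eq[OF X] rk by simp
  have dU: "subdim n (U_sub r n d :: 'a vec set) = r" using U_sub_props[OF dr rnr] by auto
  show ?thesis unfolding inj_ball_def Grass_def inj_dist_def
    using sV dV dU sum_dim(2)[OF X dr rnr] by simp
qed

lemma Cm0: assumes X: "X \<in> carrier_mat r n" shows "col_slice X r n = Cm r n 0 X"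
  using X unfolding col_slice_def Cm_def by (intro eq_matI) auto

lemma Cmd:
  fixes X :: "'a::field mat"
  assumes X: "X \<in> carrier_mat r n" and d1: "1 \<le> d" and dr: "d \<le> r" and rnr: "r \<le> n - r"
  shows "hconcat (hconcat (col_slice (col_slice X r n) 0 (d - 1) - col_slice (col_slice X 0 r) 0 (d - 1))
           (mat_of_cols r [col (col_slice X r n) (d - 1) - col (col_slice X 0 r) (d - 1)]))
           (col_slice (col_slice X r n) d (n - r)) = Cm r n d X"
    (is "?H = _")
proof (rule eq_matI)
  have dimH: "dim_row ?H = r" "dim_col ?H = n - r" using X d1 dr rnr by (auto simp: col_slice_def)
  show "dim_row ?H = dim_row (Cm r n d X)" "dim_col ?H = dim_col (Cm r n d X)"
    using dimH unfolding Cm_def by auto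
  fix i j assume i: "i < dim_row (Cm r n d X)" and j: "j < dim_col (Cm r n d X)"
  then have i': "i < r" and j': "j < n - r" unfolding Cm_def by auto
  show "?H $$ (i, j) = Cm r n d X $$ (i, j)"
  proof (cases "j < d - 1")
    case True
    then have jd: "j < d" by simp
    show ?thesis using True jd i' j' X d1 dr rnr
      by (simp add: hconcat_index col_slice_def Cm_def)
  next
    case False
    show ?thesis
    proof (cases "j = d - 1")
      case True
      then show ?thesis using i' j' X d1 dr rnr
        by (simp add: hconcat_index col_slice_def Cm_def mat_of_cols_index)
    next
      case False2: False
      then have "d \<le> j" using False by auto
      then show ?thesis using i' j' X d1 dr rnr False False2
        by (simp add: hconcat_index col_slice_def Cm_def)
    qed
  qed
qed

theorem lemma10:
  fixes X :: "'a::{finite,field} mat" and r n u s d :: nat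
  assumes "r \<le> n div 2" and "u \<le> r" and "s \<le> r" and "1 \<le> d" and "d \<le> r"
    and "X \<in> carrier_mat r n"
  shows "X \<in> F_set r n u s d \<longleftrightarrow>
    (let A = col_slice X 0 r; B = col_slice X r n;
         A1 = col_slice A 0 (d - 1); a = col A (d - 1);
         B1 = col_slice B 0 (d - 1); b = col B (d - 1); B2 = col_slice B d (n - r)
     in rk X = r \<and> rk B \<le> u \<and>
        rk (hconcat (hconcat (B1 - A1) (mat_of_cols r [b - a])) B2) \<le> s)"
proof -
  have X: "X \<in> carrier_mat r n" by fact
  have rnr: "r \<le> n - r" using assms(1) by linarith
  have "X \<in> F_set r n u s d \<longleftrightarrow> rk X = r \<and> rk (Cm r n 0 X) \<le> u \<and> rk (Cm r n d X) \<le> s"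
    unfolding F_set_def using ball_iff[OF X _ rnr] X assms(5) by auto
  note main = this
  show ?thesis unfolding Let_def
    apply (subst Cmd[OF X assms(4) assms(5) rnr])
    apply (subst Cm0[OF X])
    by (rule main)
qed

end
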